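(* Let $\Pi$ be a $3$-decomposable $30$-half-period with classes $A,B,C$. Then $N_k^{bi}(\Pi)=3k$ for $k=1,2,\dots,10$.
   Context: An allowable sequence on an $n$-element set is a doubly infinite sequence of permutations of the set (lists on positions $1,\dots,n$) in which consecutive permutations differ by swapping two adjacent elements (a transposition) and $\pi_{i+\binom n2}$ is the reverse of $\pi_i$; an $n$-half-period is a block $(\pi_0,\dots,\pi_{\binom n2})$ of consecutive permutations (each pair of elements is swapped exactly once in it). A transposition swapping the elements in positions $i,i+1$ is an $i$-transposition; for $1\le k\le n/2$ it is $k$-critical if it is a $k$-transposition or an $(n-k)$-transposition. An $n$-half-period $\Pi$ ($3\mid n$) is $3$-decomposable if its elements can be labeled $A=\{a_1,\dots,a_{n/3}\}$, $B=\{b_1,\dots,b_{n/3}\}$, $C=\{c_1,\dots,c_{n/3}\}$ so that its first permutation is $(a_{n/3},\dots,a_1,b_1,\dots,b_{n/3},c_1,\dots,c_{n/3})$, every transposition between an element of $A$ and an element of $B$ occurs before every transposition between an element of $C$ and an element of $A\cup B$, and every transposition between $A$ and $C$ occurs before every transposition between $B$ and $C$. A transposition is bichromatic if its two elements lie in different classes among $A,B,C$, and monochromatic otherwise. $N_k^{bi}(\Pi)$ is the number of bichromatic $k$-critical transpositions of $\Pi$. *)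

theory Defs
  imports Main
begin

text \<open>A permutation of an n-element set is a list of its n distinct elements
  (positions 1..n). The j-transposition (1 <= j < n) swaps the elements at
  positions j and j+1, i.e. at list indices j-1 and j.\<close>

definition adj_swap :: "'a list \<Rightarrow> nat \<Rightarrow> 'a list" where
  "adj_swap xs j = xs[j - 1 := xs ! j, j := xs ! (j - 1)]"

definition trans_pos :: "'a list list \<Rightarrow> nat \<Rightarrow> nat" where
  "trans_pos ps i = (THE j. 1 \<le> j \<and> j < length (ps ! i) \<and> ps ! Suc i = adj_swap (ps ! i) j)"

definition trans_elems :: "'a list list \<Rightarrow> nat \<Rightarrow> 'a set" where
  "trans_elems ps i = {ps ! i ! (trans_pos ps i - 1), ps ! i ! trans_pos ps i}"

definition half_period :: "nat \<Rightarrow> 'a list list \<Rightarrow> bool" where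
  "half_period n ps \<longleftrightarrow>
     length ps = (n choose 2) + 1 \<and>
     (\<forall>i < length ps. distinct (ps ! i) \<and> length (ps ! i) = n \<and> set (ps ! i) = set (ps ! 0)) \<and>
     (\<forall>i < n choose 2. \<exists>j. 1 \<le> j \<and> j < n \<and> ps ! Suc i = adj_swap (ps ! i) j) \<and>
     (\<forall>x \<in> set (ps ! 0). \<forall>y \<in> set (ps ! 0). x \<noteq> y \<longrightarrow>
        card {i. i < n choose 2 \<and> trans_elems ps i = {x, y}} = 1)"

definition k_critical :: "nat \<Rightarrow> nat \<Rightarrow> 'a list list \<Rightarrow> nat \<Rightarrow> bool" where
  "k_critical n k ps i \<longleftrightarrow> trans_pos ps i = k \<or> trans_pos ps i = n - k"

definition between :: "'a set \<Rightarrow> 'a set \<Rightarrow> 'a list list \<Rightarrow> nat \<Rightarrow> bool" where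
  "between X Y ps i \<longleftrightarrow> (\<exists>x\<in>X. \<exists>y\<in>Y. trans_elems ps i = {x, y})"

definition three_decomposable :: "nat \<Rightarrow> 'a list list \<Rightarrow> 'a set \<Rightarrow> 'a set \<Rightarrow> 'a set \<Rightarrow> bool" where
  "three_decomposable n ps A B C \<longleftrightarrow>
     half_period n ps \<and> 3 dvd n \<and>
     (\<exists>a b c :: nat \<Rightarrow> 'a.
        A = a ` {1..n div 3} \<and> B = b ` {1..n div 3} \<and> C = c ` {1..n div 3} \<and>
        ps ! 0 = rev (map a [1..<n div 3 + 1]) @ map b [1..<n div 3 + 1] @ map c [1..<n div 3 + 1]) \<and>
     (\<forall>i < n choose 2. \<forall>i' < n choose 2.
        between A B ps i \<and> between C (A \<union> B) ps i' \<longrightarrow> i < i') \<and>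
     (\<forall>i < n choose 2. \<forall>i' < n choose 2.
        between A C ps i \<and> between B C ps i' \<longrightarrow> i < i')"

definition bichromatic :: "'a set \<Rightarrow> 'a set \<Rightarrow> 'a set \<Rightarrow> 'a list list \<Rightarrow> nat \<Rightarrow> bool" where
  "bichromatic A B C ps i \<longleftrightarrow>
     \<not> (trans_elems ps i \<subseteq> A \<or> trans_elems ps i \<subseteq> B \<or> trans_elems ps i \<subseteq> C)"

definition N_bi :: "nat \<Rightarrow> nat \<Rightarrow> 'a set \<Rightarrow> 'a set \<Rightarrow> 'a set \<Rightarrow> 'a list list \<Rightarrow> nat" where
  "N_bi n k A B C ps = card {i. i < n choose 2 \<and> k_critical n k ps i \<and> bichromatic A B C ps i}"

end

theory Submission imports Defs begin

definition pos :: "'a list \<Rightarrow> 'a \<Rightarrow> nat" where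
  "pos xs x = (THE j. j < length xs \<and> xs ! j = x)"

lemma pos_nth: "distinct xs \<Longrightarrow> j < length xs \<Longrightarrow> pos xs (xs ! j) = j"
  unfolding pos_def by (rule the_equality) (auto simp: nth_eq_iff_index_eq)

lemma pos_in: "distinct xs \<Longrightarrow> x \<in> set xs \<Longrightarrow> pos xs x < length xs \<and> xs ! pos xs x = x"
  by (metis in_set_conv_nth pos_nth)

lemma pos_inj: "distinct xs \<Longrightarrow> inj_on (pos xs) (set xs)"
  by (metis inj_onI pos_in)

lemma adj_swap_length[simp]: "length (adj_swap xs q) = length xs"
  by (simp add: adj_swap_def)

lemma adj_swap_nth: "j < length xs \<Longrightarrow> 1 \<le> q \<Longrightarrow> q < length xs \<Longrightarrow>
  adj_swap xs q ! j = (if j = q - 1 then xs ! q else if j = q then xs ! (q - 1) else xs ! j)"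
  by (auto simp: adj_swap_def nth_list_update)

lemma adj_swap_set: "1 \<le> q \<Longrightarrow> q < length xs \<Longrightarrow> set (adj_swap xs q) = set xs"
  unfolding adj_swap_def by (rule set_swap) auto

lemma adj_swap_distinct: "1 \<le> q \<Longrightarrow> q < length xs \<Longrightarrow> distinct (adj_swap xs q) = distinct xs"
  unfolding adj_swap_def by (rule distinct_swap) auto

lemma adj_swap_pos:
  assumes "distinct xs" "1 \<le> q" "q < length xs" "z \<in> set xs"
  shows "pos (adj_swap xs q) z = (if z = xs ! (q-1) then q else if z = xs ! q then q - 1 else pos xs z)"
proof -
  let ?ys = "adj_swap xs q"
  have d: "distinct ?ys" using assms adj_swap_distinct by blast
  have l: "length ?ys = length xs" by simp
  have q1: "q - 1 < length xs" "q - 1 \<noteq> q" using assms by auto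
  have e1: "?ys ! q = xs ! (q-1)" using adj_swap_nth[of q xs q] assms q1 by presburger
  have e2: "?ys ! (q-1) = xs ! q" using adj_swap_nth[of "q-1" xs q] assms q1 by presburger
  show ?thesis
  proof (cases "z = xs ! (q-1)")
    case True
    then show ?thesis using pos_nth[OF d, of q] assms e1 l by auto
  next
    case F1: False
    show ?thesis
    proof (cases "z = xs ! q")
      case True
      then show ?thesis using pos_nth[OF d, of "q-1"] assms e2 l q1 F1 by auto
    next
      case False
      obtain p where p: "p < length xs" "xs ! p = z" using assms(4) by (metis in_set_conv_nth)
      have pp: "pos xs z = p" using pos_nth[OF assms(1) p(1)] p by simp
      have "p \<noteq> q - 1" "p \<noteq> q" using p F1 False by auto
      then have "?ys ! p = z" using p assms adj_swap_nth[of p xs q] by presburger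
      then show ?thesis using pos_nth[OF d, of p] p F1 False pp l by auto
    qed
  qed
qed

lemma adj_swap_unique:
  assumes "distinct xs" "1 \<le> q" "q < length xs" "1 \<le> q'" "q' < length xs"
    "adj_swap xs q = adj_swap xs q'"
  shows "q = q'"
proof (rule ccontr)
  assume ne: "q \<noteq> q'"
  have h1: "adj_swap xs q ! (q-1) = adj_swap xs q' ! (q-1)" using assms by simp
  have h2: "adj_swap xs q' ! (q'-1) = adj_swap xs q ! (q'-1)" using assms by simp
  show False
  proof (cases "q < q'")
    case True
    have "adj_swap xs q ! (q-1) = xs ! q" using True assms by (subst adj_swap_nth) auto
    moreover have "adj_swap xs q' ! (q-1) = xs ! (q-1)" using True assms by (subst adj_swap_nth) auto
    ultimately have "xs ! q = xs ! (q - 1)" using h1 by simp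
    then show False using assms nth_eq_iff_index_eq[of xs q "q-1"] by linarith
  next
    case False
    then have "q' < q" using ne by simp
    have "adj_swap xs q' ! (q'-1) = xs ! q'" using \<open>q' < q\<close> assms by (subst adj_swap_nth) auto
    moreover have "adj_swap xs q ! (q'-1) = xs ! (q'-1)" using \<open>q' < q\<close> assms by (subst adj_swap_nth) auto
    ultimately have "xs ! q' = xs ! (q' - 1)" using h2 by simp
    then show False using assms nth_eq_iff_index_eq[of xs q' "q'-1"] by linarith
  qed
qed

locale hp =
  fixes n :: nat and ps :: "'a list list"
  assumes hp: "half_period n ps"
begin

abbreviation "NN \<equiv> n choose 2"
abbreviation "S0 \<equiv> set (ps ! 0)"

lemma len_ps: "length ps = NN + 1" using hp unfolding half_period_def by simp

lemma perm_props: "i \<le> NN \<Longrightarrow> distinct (ps ! i) \<and> length (ps ! i) = n \<and> set (ps ! i) = S0"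
  using hp unfolding half_period_def by (metis Suc_eq_plus1 le_imp_less_Suc)

lemma tp_props: assumes "i < NN"
  shows "1 \<le> trans_pos ps i \<and> trans_pos ps i < n \<and> ps ! Suc i = adj_swap (ps ! i) (trans_pos ps i)"
proof -
  obtain j where j: "1 \<le> j" "j < n" "ps ! Suc i = adj_swap (ps ! i) j"
    using hp assms unfolding half_period_def by blast
  have pi: "distinct (ps ! i)" "length (ps ! i) = n" using perm_props[of i] assms by linarith+
  have "trans_pos ps i = j" unfolding trans_pos_def
  proof (rule the_equality)
    show "1 \<le> j \<and> j < length (ps ! i) \<and> ps ! Suc i = adj_swap (ps ! i) j" using j pi by simp
  next
    fix j' assume "1 \<le> j' \<and> j' < length (ps ! i) \<and> ps ! Suc i = adj_swap (ps ! i) j'"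
    then show "j' = j" using adj_swap_unique[of "ps ! i" j' j] j pi by metis
  qed
  then show ?thesis using j by simp
qed

lemma te_def': "trans_elems ps i = {ps ! i ! (trans_pos ps i - 1), ps ! i ! trans_pos ps i}"
  by (simp add: trans_elems_def)

lemma pos_step:
  assumes i: "i < NN" and x: "x \<in> S0" and y: "y \<in> S0" and xy: "x \<noteq> y"
  shows "(pos (ps ! Suc i) x < pos (ps ! Suc i) y) =
    (if trans_elems ps i = {x, y} then pos (ps ! i) y < pos (ps ! i) x else pos (ps ! i) x < pos (ps ! i) y)"
proof -
  define xs where "xs = ps ! i"
  define q where "q = trans_pos ps i"
  have q: "1 \<le> q" "q < n" "ps ! Suc i = adj_swap xs q" using tp_props[OF i] unfolding xs_def q_def by auto
  have pr: "distinct xs" "length xs = n" "set xs = S0" using perm_props[of i] i unfolding xs_def by linarith+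
  have te: "trans_elems ps i = {xs ! (q-1), xs ! q}" unfolding xs_def q_def te_def' by simp
  have xin: "x \<in> set xs" "y \<in> set xs" using x y pr by auto
  have px: "pos (ps ! Suc i) x = (if x = xs ! (q-1) then q else if x = xs ! q then q - 1 else pos xs x)"
    using adj_swap_pos[OF pr(1) q(1) _ xin(1)] q pr by simp
  have py: "pos (ps ! Suc i) y = (if y = xs ! (q-1) then q else if y = xs ! q then q - 1 else pos xs y)"
    using adj_swap_pos[OF pr(1) q(1) _ xin(2)] q pr by simp
  have pl: "pos xs (xs ! (q-1)) = q - 1" "pos xs (xs ! q) = q" using pos_nth[OF pr(1), of "q-1"] pos_nth[OF pr(1), of q] pr q by auto
  have nx: "x \<noteq> xs ! (q-1) \<Longrightarrow> pos xs x \<noteq> q - 1" "x \<noteq> xs ! q \<Longrightarrow> pos xs x \<noteq> q"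
    using pos_in[OF pr(1) xin(1)] by metis+
  have ny: "y \<noteq> xs ! (q-1) \<Longrightarrow> pos xs y \<noteq> q - 1" "y \<noteq> xs ! q \<Longrightarrow> pos xs y \<noteq> q"
    using pos_in[OF pr(1) xin(2)] by metis+
  have lr: "xs ! (q-1) \<noteq> xs ! q" using pr q nth_eq_iff_index_eq[of xs "q-1" q] by auto
  show ?thesis
  proof (cases "trans_elems ps i = {x, y}")
    case True
    then have "(x = xs ! (q-1) \<and> y = xs ! q) \<or> (x = xs ! q \<and> y = xs ! (q-1))"
      unfolding te by (auto simp: doubleton_eq_iff)
    then show ?thesis using True px py pl lr q(1) xs_def by auto
  next
    case False
    then have c: "\<not> (x = xs ! (q-1) \<and> y = xs ! q) \<and> \<not> (x = xs ! q \<and> y = xs ! (q-1))"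
      unfolding te by auto
    have g: "(pos (ps ! Suc i) x < pos (ps ! Suc i) y) = (pos xs x < pos xs y)"
    proof (cases "x = xs ! (q-1)")
      case True
      then have "y \<noteq> xs ! q" "y \<noteq> xs ! (q-1)" using c xy by auto
      then show ?thesis using px py True ny pl q(1) by auto
    next
      case F1: False
      show ?thesis
      proof (cases "x = xs ! q")
        case True
        then have "y \<noteq> xs ! q" "y \<noteq> xs ! (q-1)" using c xy by auto
        then show ?thesis using px py True ny pl q(1) by auto
      next
        case False
        have a: "pos (ps ! Suc i) x = pos xs x" "pos xs x \<noteq> q" "pos xs x \<noteq> q - 1"
          using px F1 False nx by auto
        show ?thesis
        proof (cases "y = xs ! (q-1)")
          case True then show ?thesis using a py pl q(1) by auto
        next
          case F2: False
          show ?thesis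
          proof (cases "y = xs ! q")
            case True then show ?thesis using a py pl q(1) F2 by auto
          next
            case False then show ?thesis using a py F2 by auto
          qed
        qed
      qed
    qed
    show ?thesis using g False xs_def by simp
  qed
qed

lemma pos_neq: "i \<le> NN \<Longrightarrow> x \<in> S0 \<Longrightarrow> y \<in> S0 \<Longrightarrow> x \<noteq> y \<Longrightarrow> pos (ps ! i) x \<noteq> pos (ps ! i) y"
  using perm_props[of i] pos_in[of "ps ! i" x] pos_in[of "ps ! i" y] by metis

lemma swap_unique:
  assumes "x \<in> S0" "y \<in> S0" "x \<noteq> y"
  obtains s where "s < NN" "trans_elems ps s = {x, y}" "\<And>i. i < NN \<Longrightarrow> trans_elems ps i = {x, y} \<Longrightarrow> i = s"
proof -
  have "card {i. i < NN \<and> trans_elems ps i = {x, y}} = 1"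
    using hp assms unfolding half_period_def by blast
  then obtain s where "{i. i < NN \<and> trans_elems ps i = {x, y}} = {s}" by (rule card_1_singletonE)
  then show ?thesis using that by blast
qed

lemma order_time:
  assumes x: "x \<in> S0" and y: "y \<in> S0" and xy: "x \<noteq> y" and s: "s < NN" "trans_elems ps s = {x, y}"
    and su: "\<And>i. i < NN \<Longrightarrow> trans_elems ps i = {x, y} \<Longrightarrow> i = s"
  shows "i \<le> NN \<Longrightarrow> (pos (ps ! i) x < pos (ps ! i) y) =
     (if i \<le> s then pos (ps ! 0) x < pos (ps ! 0) y else pos (ps ! 0) y < pos (ps ! 0) x)"
proof (induction i)
  case 0
  then show ?case by simp
next
  case (Suc i)
  then have i: "i < NN" "i \<le> NN" by auto
  have IH: "(pos (ps ! i) x < pos (ps ! i) y) =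
     (if i \<le> s then pos (ps ! 0) x < pos (ps ! 0) y else pos (ps ! 0) y < pos (ps ! 0) x)"
    using Suc.IH i by simp
  have n0: "pos (ps ! 0) x \<noteq> pos (ps ! 0) y" using pos_neq[of 0] x y xy by simp
  have ni: "pos (ps ! i) x \<noteq> pos (ps ! i) y" using pos_neq[of i] x y xy i by simp
  have st: "(pos (ps ! Suc i) x < pos (ps ! Suc i) y) =
    (if trans_elems ps i = {x, y} then pos (ps ! i) y < pos (ps ! i) x else pos (ps ! i) x < pos (ps ! i) y)"
    using pos_step[OF i(1) x y xy] .
  show ?case
  proof (cases "i = s")
    case True
    then show ?thesis using st IH s n0 ni by auto
  next
    case False
    then have "trans_elems ps i \<noteq> {x, y}" using su i by blast
    then show ?thesis using st IH False by auto
  qed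
qed

lemma left_right_initial:
  assumes i: "i < NN"
  shows "pos (ps ! 0) (ps ! i ! (trans_pos ps i - 1)) < pos (ps ! 0) (ps ! i ! trans_pos ps i)"
proof -
  define q where "q = trans_pos ps i"
  have q: "1 \<le> q" "q < n" using tp_props[OF i] unfolding q_def by auto
  have pr: "distinct (ps ! i)" "length (ps ! i) = n" "set (ps ! i) = S0" using perm_props[of i] i by linarith+
  define l where "l = ps ! i ! (q - 1)"
  define r where "r = ps ! i ! q"
  have lr: "l \<in> S0" "r \<in> S0" using pr q unfolding l_def r_def by (metis less_imp_diff_less nth_mem)+
  have ne: "l \<noteq> r" using pr q nth_eq_iff_index_eq[of "ps ! i" "q-1" q] unfolding l_def r_def by auto
  have te: "trans_elems ps i = {l, r}" unfolding te_def' l_def r_def q_def by simp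
  obtain s where s: "s < NN" "trans_elems ps s = {l, r}" "\<And>j. j < NN \<Longrightarrow> trans_elems ps j = {l, r} \<Longrightarrow> j = s"
    using swap_unique[OF lr ne] by blast
  have "i = s" using s(3) i te by blast
  have "pos (ps ! i) l < pos (ps ! i) r"
    using pos_nth[OF pr(1), of "q-1"] pos_nth[OF pr(1), of q] pr q unfolding l_def r_def by auto
  then show ?thesis using order_time[OF lr ne s(1,2) s(3), of i] \<open>i = s\<close> i
    unfolding l_def r_def q_def by simp
qed

lemma count_before:
  assumes i: "i \<le> NN" and x: "x \<in> S0" and Y: "Y \<subseteq> S0" and b: "\<forall>y\<in>Y. pos (ps ! i) y < pos (ps ! i) x"
  shows "card Y \<le> pos (ps ! i) x"
proof -
  have pr: "distinct (ps ! i)" "set (ps ! i) = S0" using perm_props[of i] i by linarith+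
  have inj: "inj_on (pos (ps ! i)) Y" using pos_inj[OF pr(1)] Y pr(2) by (metis inj_on_subset)
  have sub: "pos (ps ! i) ` Y \<subseteq> {..<pos (ps ! i) x}" using b by auto
  have "card Y \<le> card {..<pos (ps ! i) x}" by (rule card_inj_on_le[OF inj sub]) simp
  then show ?thesis by simp
qed

lemma count_after:
  assumes i: "i \<le> NN" and x: "x \<in> S0" and Y: "Y \<subseteq> S0" and b: "\<forall>y\<in>Y. pos (ps ! i) x < pos (ps ! i) y"
  shows "card Y + pos (ps ! i) x + 1 \<le> n"
proof -
  have pr: "distinct (ps ! i)" "set (ps ! i) = S0" "length (ps ! i) = n" using perm_props[of i] i by linarith+
  have inj: "inj_on (pos (ps ! i)) Y" using pos_inj[OF pr(1)] Y pr(2) by (metis inj_on_subset)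
  have sub: "pos (ps ! i) ` Y \<subseteq> {pos (ps ! i) x<..<n}"
    using b Y pos_in[OF pr(1)] pr by auto
  have "card Y \<le> card {pos (ps ! i) x<..<n}" by (rule card_inj_on_le[OF inj sub]) simp
  moreover have "pos (ps ! i) x < n" using pos_in[OF pr(1)] x pr by auto
  ultimately show ?thesis by simp
qed

end

lemma phi_swap:
  fixes w :: "'a \<Rightarrow> int"
  assumes "1 \<le> q" "q < length xs" "p \<le> length xs"
  shows "(\<Sum>j<p. w (adj_swap xs q ! j)) = (\<Sum>j<p. w (xs ! j)) + (if q = p then w (xs ! q) - w (xs ! (q-1)) else 0)"
proof -
  consider "q < p" | "q = p" | "p < q" by linarith
  then show ?thesis
  proof cases
    case 1
    define t where "t = (\<lambda>j::nat. if j = q - 1 then q else if j = q then q - 1 else j)"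
    have "(\<Sum>j<p. w (adj_swap xs q ! j)) = (\<Sum>j<p. w (xs ! t j))"
      by (rule sum.cong) (use assms 1 in \<open>auto simp: adj_swap_nth t_def\<close>)
    also have "\<dots> = (\<Sum>j<p. w (xs ! j))"
      by (rule sum.reindex_bij_witness[of _ t t]) (use assms 1 in \<open>auto simp: t_def\<close>)
    finally show ?thesis using 1 by simp
  next
    case 2
    then obtain p' where p': "p = Suc p'" using assms by (cases p) auto
    have "(\<Sum>j<p'. w (adj_swap xs q ! j)) = (\<Sum>j<p'. w (xs ! j))"
      by (rule sum.cong) (use assms 2 p' in \<open>auto simp: adj_swap_nth\<close>)
    moreover have "adj_swap xs q ! p' = xs ! q" using assms 2 p' by (simp add: adj_swap_nth)
    ultimately show ?thesis using p' 2 by simp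
  next
    case 3
    have "(\<Sum>j<p. w (adj_swap xs q ! j)) = (\<Sum>j<p. w (xs ! j))"
      by (rule sum.cong) (use assms 3 in \<open>auto simp: adj_swap_nth\<close>)
    then show ?thesis using 3 by simp
  qed
qed


context hp begin

lemma before_initial:
  assumes x: "x \<in> S0" and y: "y \<in> S0" and xy: "x \<noteq> y" and i: "i \<le> NN"
    and late: "\<And>s. s < NN \<Longrightarrow> trans_elems ps s = {x, y} \<Longrightarrow> i \<le> s"
    and b0: "pos (ps ! 0) x < pos (ps ! 0) y"
  shows "pos (ps ! i) x < pos (ps ! i) y"
proof -
  obtain s where s: "s < NN" "trans_elems ps s = {x, y}" "\<And>j. j < NN \<Longrightarrow> trans_elems ps j = {x, y} \<Longrightarrow> j = s"
    using swap_unique[OF x y xy] by blast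
  have "i \<le> s" using late s by blast
  then show ?thesis using order_time[OF x y xy s(1,2) s(3) i] b0 by simp
qed

lemma before_flipped:
  assumes x: "x \<in> S0" and y: "y \<in> S0" and xy: "x \<noteq> y" and i: "i \<le> NN"
    and early: "\<And>s. s < NN \<Longrightarrow> trans_elems ps s = {x, y} \<Longrightarrow> s < i"
    and b0: "pos (ps ! 0) x < pos (ps ! 0) y"
  shows "pos (ps ! i) y < pos (ps ! i) x"
proof -
  obtain s where s: "s < NN" "trans_elems ps s = {x, y}" "\<And>j. j < NN \<Longrightarrow> trans_elems ps j = {x, y} \<Longrightarrow> j = s"
    using swap_unique[OF x y xy] by blast
  have "s < i" using early s by blast
  then have "\<not> (pos (ps ! i) x < pos (ps ! i) y)" using order_time[OF x y xy s(1,2) s(3) i] b0 by simp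
  moreover have "pos (ps ! i) x \<noteq> pos (ps ! i) y" using pos_neq[OF i x y xy] .
  ultimately show ?thesis by simp
qed

lemma potential:
  fixes w :: "'a \<Rightarrow> int"
  assumes p: "p \<le> n"
  shows "(\<Sum>j<p. w (ps ! NN ! j)) - (\<Sum>j<p. w (ps ! 0 ! j)) =
    (\<Sum>i<NN. if trans_pos ps i = p then w (ps ! i ! p) - w (ps ! i ! (p - 1)) else 0)"
proof -
  define phi where "phi i = (\<Sum>j<p. w (ps ! i ! j))" for i
  have step: "phi (Suc i) - phi i = (if trans_pos ps i = p then w (ps ! i ! p) - w (ps ! i ! (p - 1)) else 0)"
    if i: "i < NN" for i
  proof -
    have t: "1 \<le> trans_pos ps i" "trans_pos ps i < n" "ps ! Suc i = adj_swap (ps ! i) (trans_pos ps i)"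
      using tp_props[OF i] by auto
    have l: "length (ps ! i) = n" using perm_props[of i] i by linarith
    show ?thesis unfolding phi_def t(3) using phi_swap[of "trans_pos ps i" "ps ! i" p w] t l p by auto
  qed
  have "(\<Sum>i<NN. phi (Suc i) - phi i) = phi NN - phi 0" by (rule sum_lessThan_telescope)
  moreover have "(\<Sum>i<NN. phi (Suc i) - phi i) =
     (\<Sum>i<NN. if trans_pos ps i = p then w (ps ! i ! p) - w (ps ! i ! (p - 1)) else 0)"
    by (rule sum.cong) (auto simp: step)
  ultimately show ?thesis unfolding phi_def by simp
qed

end

lemma sum_prefix_const: "(\<Sum>j<m. if j < t then c else 0) = of_nat (min m t) * (c :: int)"
  by (induction m) (auto simp: min_def algebra_simps)

lemma sum_suffix_const: "(\<Sum>j<m. if j < t then 0 else c) = of_nat (m - t) * (c :: int)"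
  by (induction m) (auto simp: algebra_simps Suc_diff_le)


locale dec = hp "30" ps for ps :: "'a list list" +
  fixes A B C :: "'a set" and a b c :: "nat \<Rightarrow> 'a"
  assumes AA: "A = a ` {1..10}" and BB: "B = b ` {1..10}" and CC: "C = c ` {1..10}"
    and L0: "ps ! 0 = rev (map a [1..<11]) @ map b [1..<11] @ map c [1..<11]"
    and ABC: "\<forall>i<NN. \<forall>i'<NN. between A B ps i \<and> between C (A \<union> B) ps i' \<longrightarrow> i < i'"
    and ACB: "\<forall>i<NN. \<forall>i'<NN. between A C ps i \<and> between B C ps i' \<longrightarrow> i < i'"
begin

lemma setA: "set (rev (map a [1..<11])) = A" unfolding AA by auto
lemma setB: "set (map b [1..<11]) = B" unfolding BB by auto
lemma setC: "set (map c [1..<11]) = C" unfolding CC by auto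

lemma dist0: "distinct (ps ! 0)" using perm_props[of 0] by simp

lemma disj: "A \<inter> B = {}" "A \<inter> C = {}" "B \<inter> C = {}"
  using dist0 unfolding L0 setA[symmetric] setB[symmetric] setC[symmetric] by auto

lemma S0_eq: "S0 = A \<union> B \<union> C"
  unfolding L0 setA[symmetric] setB[symmetric] setC[symmetric] by auto

lemma cards: "card A = 10" "card B = 10" "card C = 10"
proof -
  have d: "distinct (rev (map a [1..<11]))" "distinct (map b [1..<11])" "distinct (map c [1..<11])"
    using dist0 unfolding L0 by auto
  show "card A = 10" using distinct_card[OF d(1)] setA by simp
  show "card B = 10" using distinct_card[OF d(2)] setB by simp
  show "card C = 10" using distinct_card[OF d(3)] setC by simp
qed

lemma class0: "j < 30 \<Longrightarrow> (j < 10 \<longrightarrow> ps ! 0 ! j \<in> A) \<and> (10 \<le> j \<and> j < 20 \<longrightarrow> ps ! 0 ! j \<in> B) \<and> (20 \<le> j \<longrightarrow> ps ! 0 ! j \<in> C)"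
proof -
  assume j: "j < 30"
  have la: "length (rev (map a [1..<11])) = 10" and lb: "length (map b [1..<11]) = 10" and lc: "length (map c [1..<11]) = 10" by simp_all
  have 1: "j < 10 \<Longrightarrow> ps ! 0 ! j \<in> A"
  proof -
    assume "j < 10"
    then have "ps ! 0 ! j = rev (map a [1..<11]) ! j" unfolding L0 using la by (simp add: nth_append)
    then show ?thesis using setA la \<open>j < 10\<close> by (metis nth_mem)
  qed
  have 2: "10 \<le> j \<Longrightarrow> j < 20 \<Longrightarrow> ps ! 0 ! j \<in> B"
  proof -
    assume "10 \<le> j" "j < 20"
    then have n1: "\<not> j < length (rev (map a [1..<11]))" using la by simp
    have "ps ! 0 ! j = (map b [1..<11] @ map c [1..<11]) ! (j - length (rev (map a [1..<11])))"
      unfolding L0 nth_append[of "rev (map a [1..<11])"] if_not_P[OF n1] by (rule refl)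
    then have e: "ps ! 0 ! j = (map b [1..<11] @ map c [1..<11]) ! (j - 10)" using la by simp
    have "j - 10 < length (map b [1..<11])" using lb \<open>j < 20\<close> by simp
    then have "ps ! 0 ! j = map b [1..<11] ! (j - 10)" unfolding e nth_append[of "map b [1..<11]"] by (simp only: if_P)
    moreover have "j - 10 < 10" using \<open>j < 20\<close> by simp
    ultimately show ?thesis using setB lb by (metis nth_mem)
  qed
  have 3: "20 \<le> j \<Longrightarrow> ps ! 0 ! j \<in> C"
  proof -
    assume "20 \<le> j"
    then have n1: "\<not> j < length (rev (map a [1..<11]))" using la by simp
    have "ps ! 0 ! j = (map b [1..<11] @ map c [1..<11]) ! (j - length (rev (map a [1..<11])))"
      unfolding L0 nth_append[of "rev (map a [1..<11])"] if_not_P[OF n1] by (rule refl)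
    then have e: "ps ! 0 ! j = (map b [1..<11] @ map c [1..<11]) ! (j - 10)" using la by simp
    have "\<not> j - 10 < length (map b [1..<11])" using lb \<open>20 \<le> j\<close> by simp
    then have "ps ! 0 ! j = map c [1..<11] ! (j - 10 - length (map b [1..<11]))" unfolding e nth_append[of "map b [1..<11]"] by (simp only: if_False)
    then have "ps ! 0 ! j = map c [1..<11] ! (j - 10 - 10)" using lb by simp
    then have "ps ! 0 ! j = map c [1..<11] ! (j - 20)" by simp
    moreover have "j - 20 < 10" using j by simp
    ultimately show ?thesis using setC lc by (metis nth_mem)
  qed
  show ?thesis using 1 2 3 by blast
qed


lemma pos0_class:
  assumes x: "x \<in> S0"
  shows "(x \<in> A \<longrightarrow> pos (ps ! 0) x < 10) \<and> (x \<in> B \<longrightarrow> 10 \<le> pos (ps ! 0) x \<and> pos (ps ! 0) x < 20)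
    \<and> (x \<in> C \<longrightarrow> 20 \<le> pos (ps ! 0) x)"
proof -
  have l: "length (ps ! 0) = 30" using perm_props[of 0] by simp
  have p: "pos (ps ! 0) x < 30" "ps ! 0 ! pos (ps ! 0) x = x" using pos_in[OF dist0 x] l by auto
  have c: "(pos (ps ! 0) x < 10 \<longrightarrow> x \<in> A) \<and> (10 \<le> pos (ps ! 0) x \<and> pos (ps ! 0) x < 20 \<longrightarrow> x \<in> B)
     \<and> (20 \<le> pos (ps ! 0) x \<longrightarrow> x \<in> C)" using class0[OF p(1)] p(2) by simp
  show ?thesis using c disj by auto
qed

lemma init_order:
  assumes "x \<in> S0" "y \<in> S0"
  shows "x \<in> A \<Longrightarrow> y \<in> B \<union> C \<Longrightarrow> pos (ps ! 0) x < pos (ps ! 0) y"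
    and "x \<in> B \<Longrightarrow> y \<in> C \<Longrightarrow> pos (ps ! 0) x < pos (ps ! 0) y"
  using pos0_class[OF assms(1)] pos0_class[OF assms(2)] by auto

lemma AB_S0: "A \<subseteq> S0" "B \<subseteq> S0" "C \<subseteq> S0" using S0_eq by auto

lemma final_C:
  assumes j: "j < 30"
  shows "ps ! NN ! j \<in> C \<longleftrightarrow> j < 10"
proof -
  have pr: "distinct (ps ! NN)" "length (ps ! NN) = 30" "set (ps ! NN) = S0" using perm_props[of NN] by auto
  define z where "z = ps ! NN ! j"
  have z: "z \<in> S0" using pr j unfolding z_def by (metis nth_mem)
  have pz: "pos (ps ! NN) z = j" using pos_nth[OF pr(1)] pr j unfolding z_def by simp
  show ?thesis
  proof
    assume zC: "ps ! NN ! j \<in> C"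
    have "\<forall>y\<in>A \<union> B. pos (ps ! NN) z < pos (ps ! NN) y"
    proof
      fix y assume y: "y \<in> A \<union> B"
      have yS: "y \<in> S0" using y AB_S0 by auto
      have ne: "y \<noteq> z" using y zC disj z_def by auto
      show "pos (ps ! NN) z < pos (ps ! NN) y"
        by (rule before_flipped[OF yS z ne order.refl]) (use y zC z_def init_order[OF yS z] in auto)
    qed
    from count_after[OF order.refl z _ this] have "card (A \<union> B) + j + 1 \<le> 30" using AB_S0 pz by auto
    moreover have "card (A \<union> B) = 20" using cards disj card_Un_disjoint[of A B] AA BB by simp
    ultimately show "j < 10" by simp
  next
    assume j10: "j < 10"
    show "ps ! NN ! j \<in> C"
    proof (rule ccontr)
      assume zC: "ps ! NN ! j \<notin> C"
      then have zAB: "z \<in> A \<union> B" using z S0_eq z_def by auto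
      have "\<forall>y\<in>C. pos (ps ! NN) y < pos (ps ! NN) z"
      proof
        fix y assume y: "y \<in> C"
        have yS: "y \<in> S0" using y AB_S0 by auto
        have ne: "z \<noteq> y" using y zC z_def by auto
        show "pos (ps ! NN) y < pos (ps ! NN) z"
          by (rule before_flipped[OF z yS ne order.refl]) (use y zAB init_order[OF z yS] in auto)
      qed
      from count_before[OF order.refl z AB_S0(3) this] have "card C \<le> j" using pz by simp
      then show False using cards j10 by simp
    qed
  qed
qed


lemma lr_facts:
  assumes i: "i < NN"
  defines "l \<equiv> ps ! i ! (trans_pos ps i - 1)" and "r \<equiv> ps ! i ! trans_pos ps i"
  shows "l \<in> S0" "r \<in> S0" "l \<noteq> r" "trans_elems ps i = {l, r}" "pos (ps ! 0) l < pos (ps ! 0) r"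
    "pos (ps ! i) l = trans_pos ps i - 1" "pos (ps ! i) r = trans_pos ps i"
    "1 \<le> trans_pos ps i" "trans_pos ps i < 30"
proof -
  have q: "1 \<le> trans_pos ps i" "trans_pos ps i < 30" using tp_props[OF i] by auto
  have pr: "distinct (ps ! i)" "length (ps ! i) = 30" "set (ps ! i) = S0" using perm_props[of i] i by linarith+
  show "l \<in> S0" "r \<in> S0" using pr q unfolding l_def r_def by (metis less_imp_diff_less nth_mem)+
  show "l \<noteq> r" using pr q nth_eq_iff_index_eq[of "ps ! i" "trans_pos ps i - 1" "trans_pos ps i"] unfolding l_def r_def by auto
  show "trans_elems ps i = {l, r}" unfolding te_def' l_def r_def by simp
  show "pos (ps ! 0) l < pos (ps ! 0) r" using left_right_initial[OF i] unfolding l_def r_def .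
  show "pos (ps ! i) l = trans_pos ps i - 1" "pos (ps ! i) r = trans_pos ps i"
    using pos_nth[OF pr(1), of "trans_pos ps i - 1"] pos_nth[OF pr(1), of "trans_pos ps i"] pr q
    unfolding l_def r_def by auto
  show "1 \<le> trans_pos ps i" "trans_pos ps i < 30" using q by auto
qed

lemma no_BA: "l \<in> S0 \<Longrightarrow> r \<in> S0 \<Longrightarrow> pos (ps ! 0) l < pos (ps ! 0) r \<Longrightarrow>
  \<not> (l \<in> B \<and> r \<in> A) \<and> \<not> (l \<in> C \<and> r \<in> A) \<and> \<not> (l \<in> C \<and> r \<in> B)"
  using pos0_class[of l] pos0_class[of r] by auto

lemma bichrom_iff:
  assumes "trans_elems ps i = {l, r}"
  shows "bichromatic A B C ps i \<longleftrightarrow> \<not> ((l \<in> A \<and> r \<in> A) \<or> (l \<in> B \<and> r \<in> B) \<or> (l \<in> C \<and> r \<in> C))"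
  unfolding bichromatic_def assms by auto

lemma noAC:
  assumes i: "i < NN" and k: "1 \<le> k" "k \<le> 10" and t: "trans_pos ps i = k"
    and lA: "ps ! i ! (trans_pos ps i - 1) \<in> A" and rC: "ps ! i ! trans_pos ps i \<in> C"
  shows False
proof -
  define l where "l = ps ! i ! (trans_pos ps i - 1)"
  define r where "r = ps ! i ! trans_pos ps i"
  note f = lr_facts[OF i, folded l_def r_def]
  have "\<forall>y\<in>B. pos (ps ! i) y < pos (ps ! i) l"
  proof
    fix y assume y: "y \<in> B"
    have yS: "y \<in> S0" using y AB_S0 by auto
    have ne: "l \<noteq> y" using y lA disj l_def by auto
    show "pos (ps ! i) y < pos (ps ! i) l"
    proof (rule before_flipped[OF f(1) yS ne])
      show "i \<le> NN" using i by simp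
      show "pos (ps ! 0) l < pos (ps ! 0) y" using init_order(1)[OF f(1) yS] lA y l_def by auto
      fix s assume s: "s < NN" "trans_elems ps s = {l, y}"
      have "between A B ps s" using s lA y l_def unfolding between_def by auto
      moreover have "between C (A \<union> B) ps i" using f(4) rC lA l_def r_def unfolding between_def
        by (metis UnI1 insert_commute)
      ultimately show "s < i" using ABC s i by blast
    qed
  qed
  from count_before[OF less_imp_le[OF i] f(1) AB_S0(2) this] have "card B \<le> k - 1" using f(6) t by simp
  then show False using cards k by simp
qed

lemma noAB:
  assumes i: "i < NN" and k: "1 \<le> k" "k \<le> 10" and t: "trans_pos ps i = 30 - k"
    and lA: "ps ! i ! (trans_pos ps i - 1) \<in> A" and rB: "ps ! i ! trans_pos ps i \<in> B"
  shows False
proof -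
  define l where "l = ps ! i ! (trans_pos ps i - 1)"
  define r where "r = ps ! i ! trans_pos ps i"
  note f = lr_facts[OF i, folded l_def r_def]
  have "\<forall>y\<in>C. pos (ps ! i) r < pos (ps ! i) y"
  proof
    fix y assume y: "y \<in> C"
    have yS: "y \<in> S0" using y AB_S0 by auto
    have ne: "r \<noteq> y" using y rB disj r_def by auto
    show "pos (ps ! i) r < pos (ps ! i) y"
    proof (rule before_initial[OF f(2) yS ne])
      show "i \<le> NN" using i by simp
      show "pos (ps ! 0) r < pos (ps ! 0) y" using init_order(2)[OF f(2) yS] rB y r_def by auto
      fix s assume s: "s < NN" "trans_elems ps s = {r, y}"
      have "between A B ps i" using f(4) lA rB l_def r_def unfolding between_def by auto
      moreover have "between C (A \<union> B) ps s" using s rB y r_def unfolding between_def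
        by (metis UnI2 insert_commute)
      ultimately show "i \<le> s" using ABC s i by (meson less_imp_le)
    qed
  qed
  from count_after[OF less_imp_le[OF i] f(2) AB_S0(3) this] have "card C + (30 - k) + 1 \<le> 30" using f(7) t by simp
  then show False using cards k by simp
qed


lemma count1:
  assumes k: "1 \<le> k" "k \<le> 10"
  shows "int (card {i. i < NN \<and> trans_pos ps i = k \<and> bichromatic A B C ps i}) = 2 * int k"
proof -
  define w :: "'a \<Rightarrow> int" where "w x = (if x \<in> B then 1 else if x \<in> C then 2 else 0)" for x
  have P: "(\<Sum>j<k. w (ps ! NN ! j)) - (\<Sum>j<k. w (ps ! 0 ! j)) =
    (\<Sum>i<NN. if trans_pos ps i = k then w (ps ! i ! k) - w (ps ! i ! (k - 1)) else 0)"
    using potential[of k w] k by simp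
  have e1: "(\<Sum>j<k. w (ps ! NN ! j)) = (\<Sum>j<k. 2)"
    by (rule sum.cong) (use final_C k disj in \<open>auto simp: w_def\<close>)
  have e2: "(\<Sum>j<k. w (ps ! 0 ! j)) = (\<Sum>j<k. 0)"
  proof (rule sum.cong)
    fix j assume "j \<in> {..<k}"
    then have "ps ! 0 ! j \<in> A" using class0[of j] k by auto
    then show "w (ps ! 0 ! j) = 0" using disj unfolding w_def by auto
  qed simp
  have e3: "(if trans_pos ps i = k then w (ps ! i ! k) - w (ps ! i ! (k - 1)) else 0) =
      of_bool (trans_pos ps i = k \<and> bichromatic A B C ps i)" if i: "i < NN" for i
  proof (cases "trans_pos ps i = k")
    case True
    define l where "l = ps ! i ! (trans_pos ps i - 1)"
    define r where "r = ps ! i ! trans_pos ps i"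
    note f = lr_facts[OF i, folded l_def r_def]
    have b: "bichromatic A B C ps i \<longleftrightarrow> \<not> ((l \<in> A \<and> r \<in> A) \<or> (l \<in> B \<and> r \<in> B) \<or> (l \<in> C \<and> r \<in> C))"
      using bichrom_iff[OF f(4)] .
    have nba: "\<not> (l \<in> B \<and> r \<in> A) \<and> \<not> (l \<in> C \<and> r \<in> A) \<and> \<not> (l \<in> C \<and> r \<in> B)"
      using no_BA[OF f(1,2,5)] .
    have nac: "\<not> (l \<in> A \<and> r \<in> C)" using noAC[OF i k True] l_def r_def by blast
    have lS: "l \<in> A \<or> l \<in> B \<or> l \<in> C" "r \<in> A \<or> r \<in> B \<or> r \<in> C" using f(1,2) S0_eq by auto
    have "w r - w l = of_bool (bichromatic A B C ps i)"
      unfolding b w_def using lS nba nac disj by auto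
    then show ?thesis using True l_def r_def by simp
  qed simp
  have "(\<Sum>i<NN. if trans_pos ps i = k then w (ps ! i ! k) - w (ps ! i ! (k - 1)) else 0) =
     (\<Sum>i<NN. of_bool (trans_pos ps i = k \<and> bichromatic A B C ps i))"
    by (rule sum.cong) (auto simp: e3)
  also have "\<dots> = int (card ({..<NN} \<inter> {i. trans_pos ps i = k \<and> bichromatic A B C ps i}))"
    by simp
  also have "{..<NN} \<inter> {i. trans_pos ps i = k \<and> bichromatic A B C ps i} = {i. i < NN \<and> trans_pos ps i = k \<and> bichromatic A B C ps i}"
    by auto
  finally show ?thesis using P e1 e2 by simp
qed

lemma count2:
  assumes k: "1 \<le> k" "k \<le> 10"
  shows "int (card {i. i < NN \<and> trans_pos ps i = 30 - k \<and> bichromatic A B C ps i}) = int k"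
proof -
  define w :: "'a \<Rightarrow> int" where "w x = (if x \<in> C then 0 else -1)" for x
  have P: "(\<Sum>j<30-k. w (ps ! NN ! j)) - (\<Sum>j<30-k. w (ps ! 0 ! j)) =
    (\<Sum>i<NN. if trans_pos ps i = 30-k then w (ps ! i ! (30-k)) - w (ps ! i ! (30-k - 1)) else 0)"
    using potential[of "30-k" w] k by simp
  have e1: "(\<Sum>j<30-k. w (ps ! NN ! j)) = (\<Sum>j<30-k. if j < 10 then 0 else -1)"
    by (rule sum.cong) (use final_C k in \<open>auto simp: w_def\<close>)
  have e2: "(\<Sum>j<30-k. w (ps ! 0 ! j)) = (\<Sum>j<30-k. if j < 20 then -1 else 0)"
  proof (rule sum.cong)
    fix j assume "j \<in> {..<30-k}"
    then have "j < 30" by simp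
    then show "w (ps ! 0 ! j) = (if j < 20 then -1 else 0)"
      using class0[of j] disj unfolding w_def by (cases "j < 10"; cases "j < 20") auto
  qed simp
  have e1': "(\<Sum>j<30-k. if j < 10 then 0 else -1) = (- int (20 - k) :: int)"
    using sum_suffix_const[where m="30-k" and t=10 and c="-1"] k by simp
  have e2': "(\<Sum>j<30-k. if j < 20 then -1 else 0) = (- 20 :: int)"
    using sum_prefix_const[where m="30-k" and t=20 and c="-1"] k by simp
  have e3: "(if trans_pos ps i = 30-k then w (ps ! i ! (30-k)) - w (ps ! i ! (30-k - 1)) else 0) =
      of_bool (trans_pos ps i = 30-k \<and> bichromatic A B C ps i)" if i: "i < NN" for i
  proof (cases "trans_pos ps i = 30-k")
    case True
    define l where "l = ps ! i ! (trans_pos ps i - 1)"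
    define r where "r = ps ! i ! trans_pos ps i"
    note f = lr_facts[OF i, folded l_def r_def]
    have b: "bichromatic A B C ps i \<longleftrightarrow> \<not> ((l \<in> A \<and> r \<in> A) \<or> (l \<in> B \<and> r \<in> B) \<or> (l \<in> C \<and> r \<in> C))"
      using bichrom_iff[OF f(4)] .
    have nba: "\<not> (l \<in> B \<and> r \<in> A) \<and> \<not> (l \<in> C \<and> r \<in> A) \<and> \<not> (l \<in> C \<and> r \<in> B)"
      using no_BA[OF f(1,2,5)] .
    have nab: "\<not> (l \<in> A \<and> r \<in> B)" using noAB[OF i k True] l_def r_def by blast
    have lS: "l \<in> A \<or> l \<in> B \<or> l \<in> C" "r \<in> A \<or> r \<in> B \<or> r \<in> C" using f(1,2) S0_eq by auto
    have "w r - w l = of_bool (bichromatic A B C ps i)"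
      unfolding b w_def using lS nba nab disj by auto
    then show ?thesis using True l_def r_def by simp
  qed simp
  have "(\<Sum>i<NN. if trans_pos ps i = 30-k then w (ps ! i ! (30-k)) - w (ps ! i ! (30-k - 1)) else 0) =
     (\<Sum>i<NN. of_bool (trans_pos ps i = 30-k \<and> bichromatic A B C ps i))"
    by (rule sum.cong) (auto simp: e3)
  also have "\<dots> = int (card ({..<NN} \<inter> {i. trans_pos ps i = 30-k \<and> bichromatic A B C ps i}))"
    by simp
  also have "{..<NN} \<inter> {i. trans_pos ps i = 30-k \<and> bichromatic A B C ps i} = {i. i < NN \<and> trans_pos ps i = 30-k \<and> bichromatic A B C ps i}"
    by auto
  finally show ?thesis using P e1 e2 e1' e2' k by simp
qed

lemma main:
  assumes k: "1 \<le> k" "k \<le> 10"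
  shows "N_bi 30 k A B C ps = 3 * k"
proof -
  let ?S1 = "{i. i < NN \<and> trans_pos ps i = k \<and> bichromatic A B C ps i}"
  let ?S2 = "{i. i < NN \<and> trans_pos ps i = 30 - k \<and> bichromatic A B C ps i}"
  have "{i. i < NN \<and> k_critical 30 k ps i \<and> bichromatic A B C ps i} = ?S1 \<union> ?S2"
    unfolding k_critical_def by auto
  moreover have "?S1 \<inter> ?S2 = {}" using k by auto
  ultimately have "N_bi 30 k A B C ps = card ?S1 + card ?S2"
    unfolding N_bi_def by (simp add: card_Un_disjoint)
  moreover have "card ?S1 = 2 * k" using count1[OF k] by linarith
  moreover have "card ?S2 = k" using count2[OF k] by linarith
  ultimately show ?thesis by simp
qed

end


theorem corollary1:
  fixes ps :: "'a list list" and A B C :: "'a set" and k :: nat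
  assumes "three_decomposable 30 ps A B C"
    and "1 \<le> k" and "k \<le> 10"
  shows "N_bi 30 k A B C ps = 3 * k"
proof -
  have h: "half_period 30 ps" using assms(1) unfolding three_decomposable_def by blast
  have ex: "\<exists>a b c :: nat \<Rightarrow> 'a.
        A = a ` {1..30 div 3} \<and> B = b ` {1..30 div 3} \<and> C = c ` {1..30 div 3} \<and>
        ps ! 0 = rev (map a [1..<30 div 3 + 1]) @ map b [1..<30 div 3 + 1] @ map c [1..<30 div 3 + 1]"
    using assms(1) unfolding three_decomposable_def by blast
  have d: "(30::nat) div 3 = 10" "(30::nat) div 3 + 1 = 11" by simp_all
  obtain a b c :: "nat \<Rightarrow> 'a" where abc0: "A = a ` {1..30 div 3}" "B = b ` {1..30 div 3}" "C = c ` {1..30 div 3}"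
    "ps ! 0 = rev (map a [1..<30 div 3 + 1]) @ map b [1..<30 div 3 + 1] @ map c [1..<30 div 3 + 1]"
    using ex by auto
  have abc: "A = a ` {1..10}" "B = b ` {1..10}" "C = c ` {1..10}"
    "ps ! 0 = rev (map a [1..<11]) @ map b [1..<11] @ map c [1..<11]"
    using abc0 unfolding d by auto
  have o1: "\<forall>i<30 choose 2. \<forall>i'<30 choose 2. between A B ps i \<and> between C (A \<union> B) ps i' \<longrightarrow> i < i'"
    and o2: "\<forall>i<30 choose 2. \<forall>i'<30 choose 2. between A C ps i \<and> between B C ps i' \<longrightarrow> i < i'"
    using assms(1) unfolding three_decomposable_def by blast+
  interpret hp 30 ps by (rule hp.intro[OF h])
  interpret dec ps A B C a b c
    by (rule dec.intro[OF hp_axioms], rule dec_axioms.intro[OF abc o1 o2])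
  show ?thesis using main assms(2,3) by blast
qed

end
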